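(* Let $p,p'$ be two POPs of size $k$ having the same set of isolated vertices $I=\{i_1<i_2<\dots<i_s\}$ (with $s\ge 1$). Suppose that for every $x\in [i_1,k]\setminus I$ and every $y\in[i_1-1]$ we have $y<_p x$ and $y<_{p'}x$. Let $I_p,I_{p'}$ be the subposets of $p,p'$ induced by the labels $[i_1-1]$, and let $J_p,J_{p'}$ be the subposets of $p,p'$ induced by the labels $[i_1,k]\setminus I$. If $I_p\sim_s I_{p'}$ and $J_p=J_{p'}$ (as labeled posets), then $p\sim p'$.
   Context: A partially ordered pattern (POP) $p$ of size $k$ is a partial order $\le_p$ on the label set $[k]=\{1,\dots,k\}$. A permutation $\pi=\pi_1\cdots\pi_n\in\mathfrak S_n$ contains $p$ if there are indices $i_1<\dots<i_k$ such that $\pi_{i_j}<\pi_{i_m}$ whenever $j<_p m$; otherwise $\pi$ avoids $p$. $\mathfrak S_n(p)$ denotes the set of permutations in $\mathfrak S_n$ avoiding $p$. Two POPs $p,q$ are Wilf-equivalent, $p\sim q$, if $|\mathfrak S_n(p)|=|\mathfrak S_n(q)|$ for all $n\ge1$. A vertex (label) of $p$ is isolated if it is comparable to no other vertex. For $[a,b]=\{a,a+1,\dots,b\}$. A subposet induced by a set of labels keeps the order restricted to those labels (when the labels are $[r]$ it is a POP of size $r$). A Ferrers board $\lambda=(\lambda_1\ge\lambda_2\ge\dots\ge\lambda_n>0)$ with $\lambda_1=n$ is drawn in French notation: rows are numbered $1,\dots,n$ from bottom to top, columns from left to right, and row $i$ consists of the cells $(i,1),\dots,(i,\lambda_i)$.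 A transversal of $\lambda$ is a $0/1$-filling of its cells with exactly one $1$ in each row and each column. A transversal $T$ contains a POP $p$ of size $m$ if there are rows $r_1<\dots<r_m$ and columns $c_1<\dots<c_m$ such that every cell $(r_a,c_b)$ lies in $\lambda$, and for each $b$ the $1$ of column $c_b$ lies in row $r_{\sigma(b)}$ for some $\sigma(b)\in[m]$ (so $\sigma$ is a permutation), with $\sigma(j)<\sigma(m')$ whenever $j<_p m'$; otherwise $T$ avoids $p$. Two POPs $p,q$ are shape-Wilf-equivalent, $p\sim_s q$, if for every Ferrers board $\lambda$ the number of transversals of $\lambda$ avoiding $p$ equals the number avoiding $q$. *)

theory Defs
  imports "HOL-Combinatorics.Permutations"
begin

text \<open>A POP of size k is given by the strict part of a partial order on the labels [k]:
  P x y means x <_p y.\<close>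
definition pop :: "nat \<Rightarrow> (nat \<Rightarrow> nat \<Rightarrow> bool) \<Rightarrow> bool" where
  "pop k P \<longleftrightarrow> (\<forall>x y. P x y \<longrightarrow> x \<in> {1..k} \<and> y \<in> {1..k})
              \<and> (\<forall>x. \<not> P x x)
              \<and> (\<forall>x y z. P x y \<longrightarrow> P y z \<longrightarrow> P x z)"

definition isolated :: "nat \<Rightarrow> (nat \<Rightarrow> nat \<Rightarrow> bool) \<Rightarrow> nat \<Rightarrow> bool" where
  "isolated k P x \<longleftrightarrow> x \<in> {1..k} \<and> (\<forall>y\<in>{1..k}. \<not> P x y \<and> \<not> P y x)"

definition isolated_set :: "nat \<Rightarrow> (nat \<Rightarrow> nat \<Rightarrow> bool) \<Rightarrow> nat set" where
  "isolated_set k P = {x. isolated k P x}"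

definition restr :: "(nat \<Rightarrow> nat \<Rightarrow> bool) \<Rightarrow> nat set \<Rightarrow> nat \<Rightarrow> nat \<Rightarrow> bool" where
  "restr P A = (\<lambda>x y. x \<in> A \<and> y \<in> A \<and> P x y)"

definition contains :: "nat \<Rightarrow> (nat \<Rightarrow> nat \<Rightarrow> bool) \<Rightarrow> nat \<Rightarrow> (nat \<Rightarrow> nat) \<Rightarrow> bool" where
  "contains k P n \<pi> \<longleftrightarrow> (\<exists>i :: nat \<Rightarrow> nat.
      (\<forall>j\<in>{1..k}. i j \<in> {1..n})
    \<and> (\<forall>j m. 1 \<le> j \<longrightarrow> j < m \<longrightarrow> m \<le> k \<longrightarrow> i j < i m)
    \<and> (\<forall>j m. P j m \<longrightarrow> \<pi> (i j) < \<pi> (i m)))"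

definition avoiders :: "nat \<Rightarrow> (nat \<Rightarrow> nat \<Rightarrow> bool) \<Rightarrow> nat \<Rightarrow> (nat \<Rightarrow> nat) set" where
  "avoiders k P n = {\<pi>. \<pi> permutes {1..n} \<and> \<not> contains k P n \<pi>}"

definition wilf_equiv :: "nat \<Rightarrow> (nat \<Rightarrow> nat \<Rightarrow> bool) \<Rightarrow> (nat \<Rightarrow> nat \<Rightarrow> bool) \<Rightarrow> bool" where
  "wilf_equiv k P Q \<longleftrightarrow> (\<forall>n\<ge>1. card (avoiders k P n) = card (avoiders k Q n))"

definition ferrers :: "nat \<Rightarrow> (nat \<Rightarrow> nat) \<Rightarrow> bool" where
  "ferrers n lam \<longleftrightarrow> lam 1 = n \<and> (\<forall>i j. 1 \<le> i \<longrightarrow> i \<le> j \<longrightarrow> j \<le> n \<longrightarrow> lam j \<le> lam i)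
                     \<and> (\<forall>i\<in>{1..n}. lam i > 0)"

definition cells :: "nat \<Rightarrow> (nat \<Rightarrow> nat) \<Rightarrow> (nat \<times> nat) set" where
  "cells n lam = {(r, c). r \<in> {1..n} \<and> c \<in> {1..lam r}}"

text \<open>A transversal: the set of cells (row, column) filled with 1.\<close>
definition transversal :: "nat \<Rightarrow> (nat \<Rightarrow> nat) \<Rightarrow> (nat \<times> nat) set \<Rightarrow> bool" where
  "transversal n lam T \<longleftrightarrow> T \<subseteq> cells n lam
     \<and> (\<forall>r\<in>{1..n}. \<exists>!c. (r, c) \<in> T)
     \<and> (\<forall>c\<in>{1..n}. \<exists>!r. (r, c) \<in> T)"

definition tcontains :: "nat \<Rightarrow> (nat \<Rightarrow> nat) \<Rightarrow> (nat \<times> nat) set \<Rightarrow> nat \<Rightarrow> (nat \<Rightarrow> nat \<Rightarrow> bool) \<Rightarrow> bool" where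
  "tcontains n lam T m Q \<longleftrightarrow> (\<exists>(r :: nat \<Rightarrow> nat) (c :: nat \<Rightarrow> nat) (\<sigma> :: nat \<Rightarrow> nat).
      (\<forall>a\<in>{1..m}. r a \<in> {1..n} \<and> c a \<in> {1..n})
    \<and> (\<forall>a b. 1 \<le> a \<longrightarrow> a < b \<longrightarrow> b \<le> m \<longrightarrow> r a < r b \<and> c a < c b)
    \<and> (\<forall>a\<in>{1..m}. \<forall>b\<in>{1..m}. (r a, c b) \<in> cells n lam)
    \<and> (\<forall>b\<in>{1..m}. \<sigma> b \<in> {1..m} \<and> (r (\<sigma> b), c b) \<in> T)
    \<and> (\<forall>j m'. Q j m' \<longrightarrow> \<sigma> j < \<sigma> m'))"

definition tavoiders :: "nat \<Rightarrow> (nat \<Rightarrow> nat) \<Rightarrow> nat \<Rightarrow> (nat \<Rightarrow> nat \<Rightarrow> bool) \<Rightarrow> (nat \<times> nat) set set" where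
  "tavoiders n lam m Q = {T. transversal n lam T \<and> \<not> tcontains n lam T m Q}"

definition shape_wilf_equiv :: "nat \<Rightarrow> (nat \<Rightarrow> nat \<Rightarrow> bool) \<Rightarrow> (nat \<Rightarrow> nat \<Rightarrow> bool) \<Rightarrow> bool" where
  "shape_wilf_equiv m P Q \<longleftrightarrow>
     (\<forall>n lam. ferrers n lam \<longrightarrow> card (tavoiders n lam m P) = card (tavoiders n lam m Q))"

end

theory Submission
  imports Defs
begin

definition enum :: "nat set \<Rightarrow> nat \<Rightarrow> nat" where
  "enum S i = sorted_list_of_set S ! (i - 1)"

lemma enum_in: "finite S \<Longrightarrow> i \<in> {1..card S} \<Longrightarrow> enum S i \<in> S"
  unfolding enum_def
  by (metis Suc_pred' atLeastAtMost_iff diff_less length_sorted_list_of_set less_eq_Suc_le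
      nth_mem set_sorted_list_of_set zero_less_one order_less_le_trans)

lemma enum_mono: "finite S \<Longrightarrow> 1 \<le> i \<Longrightarrow> i < j \<Longrightarrow> j \<le> card S \<Longrightarrow> enum S i < enum S j"
  unfolding enum_def
  using strict_sorted_list_of_set[of S] sorted_wrt_nth_less[of "(<)" "sorted_list_of_set S" "i-1" "j-1"]
  by (simp add: length_sorted_list_of_set)

lemma enum_surj: "finite S \<Longrightarrow> x \<in> S \<Longrightarrow> \<exists>i\<in>{1..card S}. enum S i = x"
proof -
  assume f: "finite S" and x: "x \<in> S"
  then have "x \<in> set (sorted_list_of_set S)" by simp
  then obtain t where t: "t < length (sorted_list_of_set S)" "sorted_list_of_set S ! t = x"
    by (metis in_set_conv_nth)
  then show ?thesis unfolding enum_def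
    by (intro bexI[of _ "Suc t"]) (auto simp: f)
qed

lemma enum_less_iff: "finite S \<Longrightarrow> i \<in> {1..card S} \<Longrightarrow> j \<in> {1..card S} \<Longrightarrow>
   (enum S i < enum S j) = (i < j)"
  by (metis atLeastAtMost_iff enum_mono linorder_neqE_nat order_less_asym order_less_irrefl)

lemma enum_eq_iff: "finite S \<Longrightarrow> i \<in> {1..card S} \<Longrightarrow> j \<in> {1..card S} \<Longrightarrow>
   (enum S i = enum S j) = (i = j)"
  by (metis enum_less_iff order_less_irrefl linorder_neqE_nat)

lemma enum_le_iff: "finite S \<Longrightarrow> i \<in> {1..card S} \<Longrightarrow> j \<in> {1..card S} \<Longrightarrow>
   (enum S i \<le> enum S j) = (i \<le> j)"
  by (metis enum_less_iff not_le)

lemma sort_exists: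
  fixes w :: "nat \<Rightarrow> nat" and m :: nat
  assumes "inj_on w {1..m}"
  shows "\<exists>r \<sigma>. (\<forall>a b. 1 \<le> a \<longrightarrow> a < b \<longrightarrow> b \<le> m \<longrightarrow> r a < r b)
     \<and> (\<forall>b\<in>{1..m}. \<sigma> b \<in> {1..m} \<and> r (\<sigma> b) = w b)
     \<and> (\<forall>a\<in>{1..m}. r a \<in> w ` {1..m})"
proof -
  let ?W = "w ` {1..m}"
  have fW: "finite ?W" by (rule finite_imageI) simp
  have cW: "card ?W = m" using card_image[OF assms] by simp
  define \<sigma> where "\<sigma> b = (SOME i. i \<in> {1..m} \<and> enum ?W i = w b)" for b
  have s: "\<sigma> b \<in> {1..m} \<and> enum ?W (\<sigma> b) = w b" if "b \<in> {1..m}" for b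
  proof -
    have "\<exists>i\<in>{1..m}. enum ?W i = w b" using enum_surj[OF fW, of "w b"] that cW by auto
    then show ?thesis unfolding \<sigma>_def by (metis (mono_tags, lifting) someI_ex)
  qed
  show ?thesis
    apply (rule exI[of _ "enum ?W"], rule exI[of _ \<sigma>])
    using enum_mono[OF fW] enum_in[OF fW] s cW by auto
qed

lemma down_max:
  assumes "finite S" "\<And>c d. c \<in> S \<Longrightarrow> 1 \<le> d \<Longrightarrow> d \<le> c \<Longrightarrow> d \<in> S" "0 \<notin> S"
  shows "(c \<in> {1..Max (insert (0::nat) S)}) = (c \<in> S)"
proof
  assume "c \<in> {1..Max (insert 0 S)}"
  then have "1 \<le> c" "c \<le> Max (insert 0 S)" by auto
  moreover have "Max (insert 0 S) \<in> insert 0 S" using assms(1) by (intro Max_in) auto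
  ultimately show "c \<in> S" using assms(2) by (cases "Max (insert 0 S) = 0") auto
next
  assume "c \<in> S"
  then show "c \<in> {1..Max (insert 0 S)}" using assms by (cases c) auto
qed

lemma card_fibers:
  assumes "finite A"
  shows "card {x\<in>A. P x} = (\<Sum>y\<in>f ` A. card {x\<in>A. f x = y \<and> P x})"
proof -
  have "{x\<in>A. P x} = (\<Union>y\<in>f ` A. {x\<in>A. f x = y \<and> P x})" by auto
  then have "card {x\<in>A. P x} = card (\<Union>y\<in>f ` A. {x\<in>A. f x = y \<and> P x})" by simp
  also have "\<dots> = (\<Sum>y\<in>f ` A. card {x\<in>A. f x = y \<and> P x})"
    by (rule card_UN_disjoint) (use assms in auto)
  finally show ?thesis .
qed

lemma graph_perm:
  fixes P :: "(nat \<times> nat) set"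
  assumes sub: "P \<subseteq> {1..n} \<times> {1..n}"
    and col: "\<And>j. j \<in> {1..n} \<Longrightarrow> \<exists>!a. (a, j) \<in> P"
    and row: "\<And>a. a \<in> {1..n} \<Longrightarrow> \<exists>!j. (a, j) \<in> P"
  defines "\<pi> \<equiv> (\<lambda>j. if j \<in> {1..n} then THE a. (a, j) \<in> P else j)"
  shows "\<pi> permutes {1..n}" "{(\<pi> j, j) | j. j \<in> {1..n}} = P"
proof -
  have in1: "(\<pi> j, j) \<in> P" if "j \<in> {1..n}" for j
    using theI'[OF col[OF that]] that unfolding \<pi>_def by simp
  have eq: "\<pi> j = a" if "(a, j) \<in> P" for a j
  proof -
    have j: "j \<in> {1..n}" using sub that by auto
    then show ?thesis using in1[OF j] that col[OF j] by auto
  qed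
  show "\<pi> permutes {1..n}"
  proof (rule inj_imp_permutes)
    show "inj_on \<pi> {1..n}"
    proof (rule inj_onI)
      fix x y assume "x \<in> {1..n}" "y \<in> {1..n}" "\<pi> x = \<pi> y"
      then have "(\<pi> x, x) \<in> P" "(\<pi> x, y) \<in> P" using in1 by metis+
      moreover have "\<pi> x \<in> {1..n}" using sub \<open>(\<pi> x, x) \<in> P\<close> by auto
      ultimately show "x = y" using row by blast
    qed
    show "\<pi> x \<in> {1..n}" if "x \<in> {1..n}" for x using in1[OF that] sub by auto
    show "\<pi> i = i" if "i \<notin> {1..n}" for i using that unfolding \<pi>_def by (simp only: if_False)
  qed simp
  show "{(\<pi> j, j) | j. j \<in> {1..n}} = P"
    using in1 eq sub by fastforce
qed

locale board =
  fixes n m k :: nat and J :: "nat set" and Q :: "nat \<Rightarrow> nat \<Rightarrow> bool"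
  assumes J_sub: "J \<subseteq> {m+1..k}" and Q_J: "\<And>x y. Q x y \<Longrightarrow> x \<in> J \<and> y \<in> J"
    and mk: "m < k"
begin

definition wit :: "(nat \<Rightarrow> nat) \<Rightarrow> nat \<Rightarrow> nat \<Rightarrow> (nat \<Rightarrow> nat) \<Rightarrow> bool" where
  "wit \<pi> c v g \<longleftrightarrow> (\<forall>x\<in>{m+1..k}. g x \<in> {1..n})
     \<and> (\<forall>x y. m+1 \<le> x \<longrightarrow> x < y \<longrightarrow> y \<le> k \<longrightarrow> g x < g y)
     \<and> c < g (m+1) \<and> (\<forall>x\<in>J. v < \<pi> (g x)) \<and> (\<forall>x y. Q x y \<longrightarrow> \<pi> (g x) < \<pi> (g y))"

definition R :: "(nat \<Rightarrow> nat) \<Rightarrow> nat \<Rightarrow> nat \<Rightarrow> bool" where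
  "R \<pi> c v \<longleftrightarrow> (\<exists>g. wit \<pi> c v g)"

definition Bd :: "(nat \<Rightarrow> nat) \<Rightarrow> (nat \<times> nat) set" where
  "Bd \<pi> = {(v, c). v \<in> {1..n} \<and> c \<in> {1..n} \<and> R \<pi> c v}"

definition pts :: "(nat \<Rightarrow> nat) \<Rightarrow> (nat \<times> nat) set" where
  "pts \<pi> = {(\<pi> j, j) | j. j \<in> {1..n}}"

definition key :: "(nat \<Rightarrow> nat) \<Rightarrow> (nat \<times> nat) set \<times> (nat \<times> nat) set" where
  "key \<pi> = (Bd \<pi>, pts \<pi> - Bd \<pi>)"

lemma pts_iff: "(a, j) \<in> pts \<pi> \<longleftrightarrow> j \<in> {1..n} \<and> a = \<pi> j"
  unfolding pts_def by auto

lemma wit_mono: "wit \<pi> c v g \<Longrightarrow> c' \<le> c \<Longrightarrow> v' \<le> v \<Longrightarrow> wit \<pi> c' v' g"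
  unfolding wit_def using le_less_trans by blast

lemma Bd_down: "(v, c) \<in> Bd \<pi> \<Longrightarrow> 1 \<le> v' \<Longrightarrow> v' \<le> v \<Longrightarrow> 1 \<le> c' \<Longrightarrow> c' \<le> c \<Longrightarrow> (v', c') \<in> Bd \<pi>"
  unfolding Bd_def R_def by (auto intro: wit_mono)

lemma wit_cong: assumes "\<And>x. x \<in> J \<Longrightarrow> \<pi> (g x) = \<pi>' (g x)" shows "wit \<pi> c v g = wit \<pi>' c v g"
proof -
  have 1: "(\<forall>x\<in>J. v < \<pi> (g x)) = (\<forall>x\<in>J. v < \<pi>' (g x))" using assms by auto
  have 2: "(\<forall>x y. Q x y \<longrightarrow> \<pi> (g x) < \<pi> (g y)) = (\<forall>x y. Q x y \<longrightarrow> \<pi>' (g x) < \<pi>' (g y))"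
    using assms Q_J by auto
  show ?thesis unfolding wit_def 1 2 ..
qed

lemma wit_J_pos: "wit \<pi> c v g \<Longrightarrow> x \<in> J \<Longrightarrow> c < g x \<and> g x \<in> {1..n}"
proof -
  assume w: "wit \<pi> c v g" and x: "x \<in> J"
  then have xr: "x \<in> {m+1..k}" using J_sub by auto
  then have "g (m+1) \<le> g x" using w unfolding wit_def
    by (cases "x = m+1") (auto simp: less_imp_le)
  then show ?thesis using w xr unfolding wit_def by auto
qed

lemma wit_out:
  assumes "R \<pi> c v"
  shows "\<exists>g. wit \<pi> c v g \<and> (\<forall>x\<in>J. (\<pi> (g x), g x) \<notin> Bd \<pi>)"
  using assms
proof (induction "n - c" arbitrary: c v rule: less_induct)
  case less
  obtain g where g: "wit \<pi> c v g" using less.prems unfolding R_def by auto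
  show ?case
  proof (cases "\<forall>x\<in>J. (\<pi> (g x), g x) \<notin> Bd \<pi>")
    case True
    then show ?thesis using g by auto
  next
    case False
    then obtain x where x: "x \<in> J" "(\<pi> (g x), g x) \<in> Bd \<pi>" by auto
    then have Rx: "R \<pi> (g x) (\<pi> (g x))" unfolding Bd_def by auto
    have gx: "c < g x" "g x \<in> {1..n}" using wit_J_pos[OF g x(1)] by auto
    then have "n - g x < n - c" by auto
    from less.hyps[OF this Rx] obtain g' where
      g': "wit \<pi> (g x) (\<pi> (g x)) g'" "\<forall>y\<in>J. (\<pi> (g' y), g' y) \<notin> Bd \<pi>" by auto
    have "v < \<pi> (g x)" using g x(1) unfolding wit_def by auto
    then have "wit \<pi> c v g'" using wit_mono[OF g'(1)] gx by auto
    then show ?thesis using g'(2) by auto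
  qed
qed

lemma Bd_inv:
  assumes eq: "pts \<pi> - Bd \<pi> = pts \<pi>' - Bd \<pi>"
  shows "Bd \<pi>' = Bd \<pi>"
proof -
  have sub: "Bd \<pi> \<subseteq> Bd \<pi>'"
  proof
    fix z assume z: "z \<in> Bd \<pi>"
    then obtain v c where vc: "z = (v, c)" "v \<in> {1..n}" "c \<in> {1..n}" "R \<pi> c v" unfolding Bd_def by auto
    then obtain g where g: "wit \<pi> c v g" "\<forall>x\<in>J. (\<pi> (g x), g x) \<notin> Bd \<pi>" using wit_out by blast
    have "\<pi> (g x) = \<pi>' (g x)" if "x \<in> J" for x
    proof -
      have "(\<pi> (g x), g x) \<in> pts \<pi> - Bd \<pi>" using g that wit_J_pos[OF g(1) that] pts_iff by auto
      then show ?thesis using eq pts_iff by auto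
    qed
    then have "wit \<pi>' c v g" using wit_cong g(1) by metis
    then show "z \<in> Bd \<pi>'" using vc unfolding Bd_def R_def by auto
  qed
  have "Bd \<pi>' \<subseteq> Bd \<pi>"
  proof
    fix z assume z: "z \<in> Bd \<pi>'"
    then obtain v c where vc: "z = (v, c)" "v \<in> {1..n}" "c \<in> {1..n}" "R \<pi>' c v" unfolding Bd_def by auto
    then obtain g where g: "wit \<pi>' c v g" "\<forall>x\<in>J. (\<pi>' (g x), g x) \<notin> Bd \<pi>'" using wit_out by blast
    have "\<pi> (g x) = \<pi>' (g x)" if "x \<in> J" for x
    proof -
      have "(\<pi>' (g x), g x) \<in> pts \<pi>' - Bd \<pi>" using g that wit_J_pos[OF g(1) that] pts_iff sub by auto
      then have "(\<pi>' (g x), g x) \<in> pts \<pi>" using eq by blast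
      then show ?thesis using pts_iff by simp
    qed
    then have "wit \<pi> c v g" using wit_cong g(1) by metis
    then show "z \<in> Bd \<pi>" using vc unfolding Bd_def R_def by auto
  qed
  then show ?thesis using sub by auto
qed

end

locale fiber = board +
  fixes \<pi>0 :: "nat \<Rightarrow> nat"
  assumes \<pi>0: "\<pi>0 permutes {1..n}"
begin

definition "B = Bd \<pi>0"
definition "Ot = pts \<pi>0 - B"
definition "Rw = {1..n} - fst ` Ot"
definition "Cl = {1..n} - snd ` Ot"
definition "n' = card Rw"
definition "\<rho> = enum Rw"
definition "\<kappa> = enum Cl"
definition "lam i = Max (insert 0 {c'\<in>{1..n'}. (\<rho> i, \<kappa> c') \<in> B})"
definition "F = {\<pi>. \<pi> permutes {1..n} \<and> pts \<pi> - B = Ot}"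
definition "\<Phi> \<pi> = {(i, c'). i \<in> {1..n'} \<and> c' \<in> {1..n'} \<and> \<pi> (\<kappa> c') = \<rho> i}"

lemma finRw: "finite Rw" and finCl: "finite Cl"
  unfolding Rw_def Cl_def by auto

lemma O_sub: "Ot \<subseteq> pts \<pi>0" unfolding Ot_def by auto

lemma O_B: "Ot \<inter> B = {}" unfolding Ot_def by auto

lemma card_Cl: "card Cl = n'"
proof -
  have io1: "inj_on fst Ot"
  proof (rule inj_onI)
    fix x y assume "x \<in> Ot" "y \<in> Ot" "fst x = fst y"
    then have "x \<in> pts \<pi>0" "y \<in> pts \<pi>0" using O_sub by auto
    then obtain j1 j2 where "x = (\<pi>0 j1, j1)" "y = (\<pi>0 j2, j2)" unfolding pts_def by auto
    then show "x = y" using \<open>fst x = fst y\<close> permutes_inj[OF \<pi>0] by (auto dest: injD)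
  qed
  have io2: "inj_on snd Ot"
  proof (rule inj_onI)
    fix x y assume "x \<in> Ot" "y \<in> Ot" "snd x = snd y"
    then have "x \<in> pts \<pi>0" "y \<in> pts \<pi>0" using O_sub by auto
    then obtain j1 j2 where "x = (\<pi>0 j1, j1)" "y = (\<pi>0 j2, j2)" unfolding pts_def by auto
    then show "x = y" using \<open>snd x = snd y\<close> by auto
  qed
  have s1: "fst ` Ot \<subseteq> {1..n}"
  proof
    fix a assume "a \<in> fst ` Ot"
    then obtain b where "(a, b) \<in> pts \<pi>0" using O_sub by force
    then have "b \<in> {1..n}" "a = \<pi>0 b" using pts_iff by auto
    then show "a \<in> {1..n}" using permutes_in_image[OF \<pi>0, of b] by blast
  qed
  have s2: "snd ` Ot \<subseteq> {1..n}" using O_sub by (auto simp: pts_iff)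
  have "card Rw = n - card Ot" unfolding Rw_def
    using card_Diff_subset[OF finite_subset[OF s1] s1] card_image[OF io1] by simp
  moreover have "card Cl = n - card Ot" unfolding Cl_def
    using card_Diff_subset[OF finite_subset[OF s2] s2] card_image[OF io2] by simp
  ultimately show ?thesis unfolding n'_def by simp
qed

lemma \<rho>_in: "i \<in> {1..n'} \<Longrightarrow> \<rho> i \<in> Rw"
  unfolding \<rho>_def n'_def using enum_in[OF finRw] by auto
lemma \<kappa>_in: "i \<in> {1..n'} \<Longrightarrow> \<kappa> i \<in> Cl"
  unfolding \<kappa>_def using enum_in[OF finCl] card_Cl by auto
lemma \<rho>_less: "i \<in> {1..n'} \<Longrightarrow> j \<in> {1..n'} \<Longrightarrow> (\<rho> i < \<rho> j) = (i < j)"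
  unfolding \<rho>_def n'_def using enum_less_iff[OF finRw] by auto
lemma \<kappa>_less: "i \<in> {1..n'} \<Longrightarrow> j \<in> {1..n'} \<Longrightarrow> (\<kappa> i < \<kappa> j) = (i < j)"
  unfolding \<kappa>_def using enum_less_iff[OF finCl] card_Cl by auto
lemma \<rho>_le: "i \<in> {1..n'} \<Longrightarrow> j \<in> {1..n'} \<Longrightarrow> (\<rho> i \<le> \<rho> j) = (i \<le> j)"
  using \<rho>_less by (meson not_le)
lemma \<kappa>_le: "i \<in> {1..n'} \<Longrightarrow> j \<in> {1..n'} \<Longrightarrow> (\<kappa> i \<le> \<kappa> j) = (i \<le> j)"
  using \<kappa>_less by (meson not_le)
lemma \<rho>_eq: "i \<in> {1..n'} \<Longrightarrow> j \<in> {1..n'} \<Longrightarrow> (\<rho> i = \<rho> j) = (i = j)"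
  using \<rho>_less by (metis less_irrefl linorder_neqE_nat)
lemma \<kappa>_eq: "i \<in> {1..n'} \<Longrightarrow> j \<in> {1..n'} \<Longrightarrow> (\<kappa> i = \<kappa> j) = (i = j)"
  using \<kappa>_less by (metis less_irrefl linorder_neqE_nat)
lemma \<rho>_surj: "x \<in> Rw \<Longrightarrow> \<exists>i\<in>{1..n'}. \<rho> i = x"
  unfolding \<rho>_def n'_def using enum_surj[OF finRw] by auto
lemma \<kappa>_surj: "x \<in> Cl \<Longrightarrow> \<exists>i\<in>{1..n'}. \<kappa> i = x"
  unfolding \<kappa>_def using enum_surj[OF finCl] card_Cl by auto
lemma Rw_sub: "Rw \<subseteq> {1..n}" unfolding Rw_def by auto
lemma Cl_sub: "Cl \<subseteq> {1..n}" unfolding Cl_def by auto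

lemma \<pi>0_F: "\<pi>0 \<in> F" unfolding F_def Ot_def using \<pi>0 by auto

lemma F_Bd: "\<pi> \<in> F \<Longrightarrow> Bd \<pi> = B"
  unfolding F_def Ot_def B_def using Bd_inv[of \<pi>0 \<pi>] by auto

lemma key_F: "\<pi> permutes {1..n} \<Longrightarrow> (key \<pi> = key \<pi>0) = (\<pi> \<in> F)"
proof
  assume p: "\<pi> permutes {1..n}" and "key \<pi> = key \<pi>0"
  then show "\<pi> \<in> F" unfolding key_def F_def Ot_def B_def by auto
next
  assume "\<pi> \<in> F"
  then show "key \<pi> = key \<pi>0" using F_Bd[of \<pi>] unfolding key_def F_def Ot_def B_def by auto
qed

lemma F_Cl:
  assumes "\<pi> \<in> F" "j \<in> {1..n}"
  shows "(j \<in> Cl) = ((\<pi> j, j) \<in> B)"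
proof -
  have Oe: "Ot = pts \<pi> - B" using assms unfolding F_def by auto
  have pj: "(\<pi> j, j) \<in> pts \<pi>" using assms pts_iff by auto
  show ?thesis
  proof
    assume "j \<in> Cl"
    then have "(\<pi> j, j) \<notin> Ot" unfolding Cl_def by force
    then show "(\<pi> j, j) \<in> B" using Oe pj by auto
  next
    assume b: "(\<pi> j, j) \<in> B"
    have "j \<notin> snd ` Ot"
    proof
      assume "j \<in> snd ` Ot"
      then obtain a where a: "(a, j) \<in> Ot" by force
      then have "(a, j) \<in> pts \<pi>" using Oe by auto
      then have "a = \<pi> j" using pts_iff by auto
      then show False using a b Oe by auto
    qed
    then show "j \<in> Cl" unfolding Cl_def using assms by auto
  qed
qed

lemma F_Rw:
  assumes "\<pi> \<in> F" "j \<in> {1..n}"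
  shows "(\<pi> j \<in> Rw) = ((\<pi> j, j) \<in> B)"
proof -
  have Oe: "Ot = pts \<pi> - B" using assms unfolding F_def by auto
  have pj: "(\<pi> j, j) \<in> pts \<pi>" using assms pts_iff by auto
  have perm: "\<pi> permutes {1..n}" using assms unfolding F_def by auto
  have pjn: "\<pi> j \<in> {1..n}" using permutes_in_image[OF perm, of j] assms(2) by blast
  show ?thesis
  proof
    assume "\<pi> j \<in> Rw"
    then have "(\<pi> j, j) \<notin> Ot" unfolding Rw_def by force
    then show "(\<pi> j, j) \<in> B" using Oe pj by auto
  next
    assume b: "(\<pi> j, j) \<in> B"
    have "\<pi> j \<notin> fst ` Ot"
    proof
      assume "\<pi> j \<in> fst ` Ot"
      then obtain j' where a: "(\<pi> j, j') \<in> Ot" by force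
      then have "(\<pi> j, j') \<in> pts \<pi>" using Oe by auto
      then have "\<pi> j = \<pi> j'" "j' \<in> {1..n}" using pts_iff by auto
      then have "j' = j" using permutes_inj[OF perm] by (auto dest: injD)
      then show False using a b Oe by auto
    qed
    then show "\<pi> j \<in> Rw" unfolding Rw_def using pjn by auto
  qed
qed

lemma cells_iff:
  "((i, c') \<in> cells n' lam) = (i \<in> {1..n'} \<and> c' \<in> {1..n'} \<and> (\<rho> i, \<kappa> c') \<in> B)"
proof (cases "i \<in> {1..n'}")
  case True
  let ?S = "{c'\<in>{1..n'}. (\<rho> i, \<kappa> c') \<in> B}"
  have "(c' \<in> {1..Max (insert 0 ?S)}) = (c' \<in> ?S)"
  proof (rule down_max)
    show "finite ?S" by simp
    show "0 \<notin> ?S" by simp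
    fix c d assume c: "c \<in> ?S" and d: "1 \<le> d" "d \<le> c"
    have dn: "d \<in> {1..n'}" using c d by auto
    have "\<kappa> d \<le> \<kappa> c" using \<kappa>_le[OF dn] c d by auto
    moreover have "1 \<le> \<kappa> d" using \<kappa>_in[OF dn] Cl_sub by auto
    moreover have "1 \<le> \<rho> i" using \<rho>_in[OF True] Rw_sub by auto
    ultimately have "(\<rho> i, \<kappa> d) \<in> B" using c Bd_down unfolding B_def by blast
    then show "d \<in> ?S" using dn by auto
  qed
  then show ?thesis unfolding cells_def lam_def using True by auto
next
  case False
  then show ?thesis unfolding cells_def by auto
qed

lemma ferrers_lam: "ferrers n' lam"
proof -
  have row1: "(\<rho> 1, \<kappa> c') \<in> B" if c: "c' \<in> {1..n'}" for c'
  proof -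
    have kc: "\<kappa> c' \<in> {1..n}" using \<kappa>_in[OF c] Cl_sub by auto
    have "(\<pi>0 (\<kappa> c'), \<kappa> c') \<in> B" using F_Cl[OF \<pi>0_F kc] \<kappa>_in[OF c] by auto
    moreover have "\<pi>0 (\<kappa> c') \<in> Rw" using F_Rw[OF \<pi>0_F kc] calculation by auto
    then obtain i0 where i0: "i0 \<in> {1..n'}" "\<rho> i0 = \<pi>0 (\<kappa> c')" using \<rho>_surj by blast
    moreover have n1: "1 \<in> {1..n'}" using c by auto
    ultimately have "\<rho> 1 \<le> \<pi>0 (\<kappa> c')" using \<rho>_le[OF n1 i0(1)] by auto
    moreover have "1 \<le> \<rho> 1" using \<rho>_in[OF n1] Rw_sub by auto
    ultimately show ?thesis using Bd_down[of "\<pi>0 (\<kappa> c')" "\<kappa> c'" \<pi>0 "\<rho> 1" "\<kappa> c'"]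
        kc \<open>(\<pi>0 (\<kappa> c'), \<kappa> c') \<in> B\<close> unfolding B_def by auto
  qed
  have l1: "lam 1 = n'"
  proof (cases "n' = 0")
    case True
    then show ?thesis unfolding lam_def by simp
  next
    case False
    have eq: "{c'\<in>{1..n'}. (\<rho> 1, \<kappa> c') \<in> B} = {1..n'}" using row1 by blast
    have "lam 1 = Max (insert 0 {1..n'})" unfolding lam_def eq ..
    also have "\<dots> = n'" using False by (intro Max_eqI) auto
    finally show ?thesis .
  qed
  have dec: "lam j \<le> lam i" if "1 \<le> i" "i \<le> j" "j \<le> n'" for i j
  proof -
    have sub: "{c'\<in>{1..n'}. (\<rho> j, \<kappa> c') \<in> B} \<subseteq> {c'\<in>{1..n'}. (\<rho> i, \<kappa> c') \<in> B}"
    proof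
      fix c' assume c': "c' \<in> {c'\<in>{1..n'}. (\<rho> j, \<kappa> c') \<in> B}"
      have "\<rho> i \<le> \<rho> j" using \<rho>_le that by auto
      moreover have "1 \<le> \<rho> i" using \<rho>_in[of i] Rw_sub that by auto
      moreover have "1 \<le> \<kappa> c'" using \<kappa>_in[of c'] Cl_sub c' by auto
      ultimately show "c' \<in> {c'\<in>{1..n'}. (\<rho> i, \<kappa> c') \<in> B}"
        using c' Bd_down[of "\<rho> j" "\<kappa> c'" \<pi>0 "\<rho> i" "\<kappa> c'"] unfolding B_def by auto
    qed
    show ?thesis unfolding lam_def by (rule Max_mono) (use sub in auto)
  qed
  have pos: "lam i > 0" if i: "i \<in> {1..n'}" for i
  proof -
    have ri: "\<rho> i \<in> {1..n}" using \<rho>_in[OF i] Rw_sub by auto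
    define j where "j = inv \<pi>0 (\<rho> i)"
    have pj: "\<pi>0 j = \<rho> i" unfolding j_def using permutes_inverses[OF \<pi>0] by simp
    have jn: "j \<in> {1..n}" using ri pj permutes_in_image[OF \<pi>0, of j] by auto
    have "(\<pi>0 j, j) \<in> B" using F_Rw[OF \<pi>0_F jn] pj \<rho>_in[OF i] by auto
    moreover have "j \<in> Cl" using F_Cl[OF \<pi>0_F jn] calculation by auto
    then obtain c0 where c0: "c0 \<in> {1..n'}" "\<kappa> c0 = j" using \<kappa>_surj by blast
    have n1: "1 \<in> {1..n'}" using i by auto
    have "\<kappa> 1 \<le> j" using \<kappa>_le[OF n1 c0(1)] c0 by auto
    moreover have "1 \<le> \<kappa> 1" using \<kappa>_in[OF n1] Cl_sub by auto
    moreover have "1 \<le> \<rho> i" using ri by auto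
    ultimately have "(\<rho> i, \<kappa> 1) \<in> B"
      using Bd_down[of "\<rho> i" j \<pi>0 "\<rho> i" "\<kappa> 1"] pj \<open>(\<pi>0 j, j) \<in> B\<close> unfolding B_def by auto
    then have "1 \<in> {c'\<in>{1..n'}. (\<rho> i, \<kappa> c') \<in> B}" using n1 by auto
    then have "1 \<le> lam i" unfolding lam_def by (intro Max_ge_iff[THEN iffD2]) auto
    then show ?thesis by auto
  qed
  show ?thesis unfolding ferrers_def using l1 dec pos by auto
qed

end

context fiber
begin

lemma F_perm: "\<pi> \<in> F \<Longrightarrow> \<pi> permutes {1..n}" unfolding F_def by auto

lemma F_Cl_Rw: "\<pi> \<in> F \<Longrightarrow> j \<in> Cl \<Longrightarrow> \<pi> j \<in> Rw"
  using F_Cl F_Rw Cl_sub by blast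

lemma \<Phi>_trans: assumes pF: "\<pi> \<in> F" shows "transversal n' lam (\<Phi> \<pi>)"
proof -
  have perm: "\<pi> permutes {1..n}" using F_perm[OF pF] .
  have sub: "\<Phi> \<pi> \<subseteq> cells n' lam"
  proof
    fix z assume z: "z \<in> \<Phi> \<pi>"
    then obtain i c' where ic: "z = (i, c')" "i \<in> {1..n'}" "c' \<in> {1..n'}" "\<pi> (\<kappa> c') = \<rho> i"
      unfolding \<Phi>_def by auto
    have kc: "\<kappa> c' \<in> Cl" "\<kappa> c' \<in> {1..n}" using \<kappa>_in[OF ic(3)] Cl_sub by auto
    have "(\<pi> (\<kappa> c'), \<kappa> c') \<in> B" using F_Cl[OF pF kc(2)] kc(1) by auto
    then show "z \<in> cells n' lam" using cells_iff ic by auto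
  qed
  have rows: "\<exists>!c. (i, c) \<in> \<Phi> \<pi>" if i: "i \<in> {1..n'}" for i
  proof -
    have ri: "\<rho> i \<in> {1..n}" using \<rho>_in[OF i] Rw_sub by auto
    define j where "j = inv \<pi> (\<rho> i)"
    have pj: "\<pi> j = \<rho> i" unfolding j_def using permutes_inverses[OF perm] by simp
    have jn: "j \<in> {1..n}" using ri pj permutes_in_image[OF perm, of j] by auto
    have "(\<pi> j, j) \<in> B" using F_Rw[OF pF jn] pj \<rho>_in[OF i] by auto
    then have "j \<in> Cl" using F_Cl[OF pF jn] by auto
    then obtain c0 where c0: "c0 \<in> {1..n'}" "\<kappa> c0 = j" using \<kappa>_surj by blast
    have ex: "(i, c0) \<in> \<Phi> \<pi>" unfolding \<Phi>_def using i c0 pj by auto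
    have un: "c = c0" if "(i, c) \<in> \<Phi> \<pi>" for c
    proof -
      have c: "c \<in> {1..n'}" "\<pi> (\<kappa> c) = \<rho> i" using that unfolding \<Phi>_def by auto
      then have "\<pi> (\<kappa> c) = \<pi> (\<kappa> c0)" using pj c0 by simp
      then have "\<kappa> c = \<kappa> c0" using injD[OF permutes_inj[OF perm]] by blast
      then show ?thesis using \<kappa>_eq c c0 by auto
    qed
    show ?thesis using ex un by blast
  qed
  have cols: "\<exists>!r. (r, c) \<in> \<Phi> \<pi>" if c: "c \<in> {1..n'}" for c
  proof -
    have "\<pi> (\<kappa> c) \<in> Rw" using F_Cl_Rw[OF pF \<kappa>_in[OF c]] .
    then obtain i0 where i0: "i0 \<in> {1..n'}" "\<rho> i0 = \<pi> (\<kappa> c)" using \<rho>_surj by blast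
    have ex: "(i0, c) \<in> \<Phi> \<pi>" unfolding \<Phi>_def using i0 c by auto
    have un: "r = i0" if "(r, c) \<in> \<Phi> \<pi>" for r
      using that i0 \<rho>_eq unfolding \<Phi>_def by auto
    show ?thesis using ex un by blast
  qed
  show ?thesis unfolding transversal_def using sub rows cols by blast
qed

lemma \<Phi>_inj: "inj_on \<Phi> F"
proof (rule inj_onI)
  fix \<pi>1 \<pi>2 assume p1: "\<pi>1 \<in> F" and p2: "\<pi>2 \<in> F" and eq: "\<Phi> \<pi>1 = \<Phi> \<pi>2"
  have perm1: "\<pi>1 permutes {1..n}" and perm2: "\<pi>2 permutes {1..n}" using F_perm p1 p2 by auto
  show "\<pi>1 = \<pi>2"
  proof
    fix j
    show "\<pi>1 j = \<pi>2 j"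
    proof (cases "j \<in> {1..n}")
      case False
      then show ?thesis using permutes_not_in[OF perm1] permutes_not_in[OF perm2] by metis
    next
      case jn: True
      show ?thesis
      proof (cases "j \<in> Cl")
        case True
        then obtain c where c: "c \<in> {1..n'}" "\<kappa> c = j" using \<kappa>_surj by blast
        have "\<pi>1 j \<in> Rw" using F_Cl_Rw[OF p1 True] .
        then obtain i where i: "i \<in> {1..n'}" "\<rho> i = \<pi>1 j" using \<rho>_surj by blast
        then have "(i, c) \<in> \<Phi> \<pi>1" unfolding \<Phi>_def using c by auto
        then have "(i, c) \<in> \<Phi> \<pi>2" using eq by simp
        then show ?thesis unfolding \<Phi>_def using c i by auto
      next
        case False
        then obtain a where a: "(a, j) \<in> Ot" using jn unfolding Cl_def by force
        have "Ot \<subseteq> pts \<pi>1" "Ot \<subseteq> pts \<pi>2" using p1 p2 unfolding F_def by auto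
        then have "a = \<pi>1 j" "a = \<pi>2 j" using a pts_iff by auto
        then show ?thesis by simp
      qed
    qed
  qed
qed

lemma \<Phi>_surj:
  assumes T: "transversal n' lam T"
  shows "\<exists>\<pi>\<in>F. \<Phi> \<pi> = T"
proof -
  have Tc: "T \<subseteq> cells n' lam" and Tr: "\<And>r. r \<in> {1..n'} \<Longrightarrow> \<exists>!c. (r, c) \<in> T"
    and Tcol: "\<And>c. c \<in> {1..n'} \<Longrightarrow> \<exists>!r. (r, c) \<in> T"
    using T unfolding transversal_def by auto
  have Tin: "i \<in> {1..n'} \<and> c \<in> {1..n'} \<and> (\<rho> i, \<kappa> c) \<in> B" if "(i, c) \<in> T" for i c
    using Tc that cells_iff by blast
  define P where "P = Ot \<union> {(\<rho> i, \<kappa> c) | i c. (i, c) \<in> T}"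
  have Opts: "(a, j) \<in> Ot \<Longrightarrow> j \<in> {1..n} \<and> a = \<pi>0 j" for a j using O_sub pts_iff by blast
  have Oc: "(a, j) \<in> Ot \<Longrightarrow> j \<notin> Cl" for a j unfolding Cl_def by force
  have Or: "(a, j) \<in> Ot \<Longrightarrow> a \<notin> Rw" for a j unfolding Rw_def by force
  have Psub: "P \<subseteq> {1..n} \<times> {1..n}"
  proof
    fix z assume "z \<in> P"
    then consider (o) a j where "z = (a, j)" "(a, j) \<in> Ot" | (t) i c where "z = (\<rho> i, \<kappa> c)" "(i, c) \<in> T"
      unfolding P_def by (cases z) auto
    then show "z \<in> {1..n} \<times> {1..n}"
    proof cases
      case o
      then show ?thesis using Opts[OF o(2)] permutes_in_image[OF \<pi>0, of j] by auto
    next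
      case t
      then show ?thesis using Tin[OF t(2)] \<rho>_in \<kappa>_in Rw_sub Cl_sub by blast
    qed
  qed
  have Pcol: "\<exists>!a. (a, j) \<in> P" if j: "j \<in> {1..n}" for j
  proof (cases "j \<in> Cl")
    case True
    then obtain c where c: "c \<in> {1..n'}" "\<kappa> c = j" using \<kappa>_surj by blast
    then obtain i where i: "(i, c) \<in> T" using Tcol by blast
    have ex: "(\<rho> i, j) \<in> P" unfolding P_def using i c by auto
    have un: "a = \<rho> i" if h: "(a, j) \<in> P" for a
    proof -
      have "(a, j) \<notin> Ot" using Oc True by blast
      then obtain i2 c2 where ic2: "(a, j) = (\<rho> i2, \<kappa> c2)" "(i2, c2) \<in> T" using h unfolding P_def by auto
      have "c2 = c" using \<kappa>_eq Tin[OF ic2(2)] c ic2(1) by auto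
      then have "i2 = i" using Tcol[OF c(1)] ic2(2) i by blast
      then show ?thesis using ic2 by simp
    qed
    show ?thesis using ex un by blast
  next
    case False
    then obtain a where a: "(a, j) \<in> Ot" using j unfolding Cl_def by force
    have ex: "(a, j) \<in> P" unfolding P_def using a by auto
    have un: "a' = a" if h: "(a', j) \<in> P" for a'
    proof (cases "(a', j) \<in> Ot")
      case True
      then show ?thesis using Opts a by auto
    next
      case False
      then obtain i2 c2 where ic2: "(a', j) = (\<rho> i2, \<kappa> c2)" "(i2, c2) \<in> T" using h unfolding P_def by auto
      then have "j \<in> Cl" using Tin[OF ic2(2)] \<kappa>_in by auto
      then show ?thesis using \<open>j \<notin> Cl\<close> by blast
    qed
    show ?thesis using ex un by blast
  qed
  have Prow: "\<exists>!j. (a, j) \<in> P" if a: "a \<in> {1..n}" for a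
  proof (cases "a \<in> Rw")
    case True
    then obtain i where i: "i \<in> {1..n'}" "\<rho> i = a" using \<rho>_surj by blast
    then obtain c where c: "(i, c) \<in> T" using Tr by blast
    have ex: "(a, \<kappa> c) \<in> P" unfolding P_def using i c by auto
    have un: "j = \<kappa> c" if h: "(a, j) \<in> P" for j
    proof -
      have "(a, j) \<notin> Ot" using Or True by blast
      then obtain i2 c2 where ic2: "(a, j) = (\<rho> i2, \<kappa> c2)" "(i2, c2) \<in> T" using h unfolding P_def by auto
      have "i2 = i" using \<rho>_eq Tin[OF ic2(2)] i ic2(1) by auto
      then have "c2 = c" using Tr[OF i(1)] ic2(2) c by blast
      then show ?thesis using ic2 by simp
    qed
    show ?thesis using ex un by blast
  next
    case False
    then obtain j where jj: "(a, j) \<in> Ot" using a unfolding Rw_def by force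
    have ex: "(a, j) \<in> P" unfolding P_def using jj by auto
    have un: "j' = j" if h: "(a, j') \<in> P" for j'
    proof (cases "(a, j') \<in> Ot")
      case True
      then have "j' \<in> {1..n}" "a = \<pi>0 j'" "j \<in> {1..n}" "a = \<pi>0 j" using Opts jj by auto
      then show ?thesis using permutes_inj[OF \<pi>0] by (auto dest: injD)
    next
      case False
      then obtain i2 c2 where ic2: "(a, j') = (\<rho> i2, \<kappa> c2)" "(i2, c2) \<in> T" using h unfolding P_def by auto
      then have "a \<in> Rw" using Tin[OF ic2(2)] \<rho>_in by auto
      then show ?thesis using \<open>a \<notin> Rw\<close> by blast
    qed
    show ?thesis using ex un by blast
  qed
  define \<pi> where "\<pi> = (\<lambda>j. if j \<in> {1..n} then THE a. (a, j) \<in> P else j)"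
  have perm: "\<pi> permutes {1..n}" and ptsP: "pts \<pi> = P"
    using graph_perm[OF Psub Pcol Prow] unfolding \<pi>_def pts_def by auto
  have TB: "{(\<rho> i, \<kappa> c) | i c. (i, c) \<in> T} \<subseteq> B" using Tin by auto
  have "pts \<pi> - B = Ot" unfolding ptsP P_def using O_B TB by auto
  then have pF: "\<pi> \<in> F" unfolding F_def using perm by auto
  have "\<Phi> \<pi> = T"
  proof (intro set_eqI iffI)
    fix z assume "z \<in> \<Phi> \<pi>"
    then obtain i c where ic: "z = (i, c)" "i \<in> {1..n'}" "c \<in> {1..n'}" "\<pi> (\<kappa> c) = \<rho> i"
      unfolding \<Phi>_def by auto
    have kc: "\<kappa> c \<in> {1..n}" "\<kappa> c \<in> Cl" using \<kappa>_in[OF ic(3)] Cl_sub by auto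
    have "(\<rho> i, \<kappa> c) \<in> P" using ptsP[symmetric] ic(4) kc pts_iff by auto
    moreover have "(\<rho> i, \<kappa> c) \<notin> Ot" using Oc kc by blast
    ultimately obtain i2 c2 where ic2: "(\<rho> i, \<kappa> c) = (\<rho> i2, \<kappa> c2)" "(i2, c2) \<in> T"
      unfolding P_def by auto
    have "i2 = i" "c2 = c" using Tin[OF ic2(2)] ic2(1) ic \<rho>_eq \<kappa>_eq by auto
    then show "z \<in> T" using ic ic2 by simp
  next
    fix z assume z: "z \<in> T"
    then obtain i c where ic: "z = (i, c)" "(i, c) \<in> T" by (cases z) auto
    have r: "i \<in> {1..n'}" "c \<in> {1..n'}" using Tin[OF ic(2)] by auto
    have "(\<rho> i, \<kappa> c) \<in> pts \<pi>" unfolding ptsP P_def using ic by auto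
    then have "\<pi> (\<kappa> c) = \<rho> i" using pts_iff by auto
    then show "z \<in> \<Phi> \<pi>" unfolding \<Phi>_def using ic r by auto
  qed
  then show ?thesis using pF by blast
qed

lemma \<Phi>_bij: "bij_betw \<Phi> F {T. transversal n' lam T}"
  unfolding bij_betw_def using \<Phi>_inj \<Phi>_trans \<Phi>_surj by blast

end

context fiber
begin

lemma contains_iff:
  assumes popk: "pop k p" and m1: "1 \<le> m"
    and Jp1: "\<And>x y. p x y \<Longrightarrow> m < x \<Longrightarrow> x \<in> J"
    and Jp2: "\<And>x y. p x y \<Longrightarrow> m < y \<Longrightarrow> y \<in> J"
    and below: "\<And>x y. x \<in> J \<Longrightarrow> y \<in> {1..m} \<Longrightarrow> p y x"
    and QJ: "Q = restr p J"
    and pF: "\<pi> \<in> F"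
  shows "contains k p n \<pi> = tcontains n' lam (\<Phi> \<pi>) m (restr p {1..m})"
proof
  have perm: "\<pi> permutes {1..n}" using F_perm[OF pF] .
  have BB: "Bd \<pi> = B" using F_Bd[OF pF] .
  have prange: "x \<in> {1..k} \<and> y \<in> {1..k}" if "p x y" for x y using popk that unfolding pop_def by blast
  assume "contains k p n \<pi>"
  then obtain i where i1: "\<forall>j\<in>{1..k}. i j \<in> {1..n}"
    and i2: "\<forall>j m. 1 \<le> j \<longrightarrow> j < m \<longrightarrow> m \<le> k \<longrightarrow> i j < i m"
    and i3: "\<forall>j m. p j m \<longrightarrow> \<pi> (i j) < \<pi> (i m)"
    unfolding contains_def by blast
  have ile: "i a \<le> i b" if "1 \<le> a" "a \<le> b" "b \<le> k" for a b
    using i2 that by (cases "a = b") (auto intro: less_imp_le)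
  define v where "v = Max ((\<lambda>a. \<pi> (i a)) ` {1..m})"
  have mfin: "finite ((\<lambda>a. \<pi> (i a)) ` {1..m})" "(\<lambda>a. \<pi> (i a)) ` {1..m} \<noteq> {}" using m1 by auto
  have v_ge: "\<pi> (i a) \<le> v" if "a \<in> {1..m}" for a unfolding v_def using mfin that by auto
  obtain a0 where a0: "a0 \<in> {1..m}" "v = \<pi> (i a0)" unfolding v_def using Max_in[OF mfin] by auto
  have vn: "v \<in> {1..n}" using a0 i1 mk permutes_in_image[OF perm, of "i a0"] by auto
  have cn: "i m \<in> {1..n}" using i1 m1 mk by auto
  have "wit \<pi> (i m) v i"
    unfolding wit_def
  proof (intro conjI ballI allI impI)
    show "i x \<in> {1..n}" if "x \<in> {m+1..k}" for x using i1 that m1 by auto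
    show "i x < i y" if "m + 1 \<le> x" "x < y" "y \<le> k" for x y using i2 that by auto
    show "i m < i (m+1)" using i2 m1 mk by auto
    show "v < \<pi> (i x)" if x: "x \<in> J" for x
    proof -
      have "\<pi> (i a0) < \<pi> (i x)" using below[OF x a0(1)] i3 by auto
      then show ?thesis using a0 by simp
    qed
    show "\<pi> (i x) < \<pi> (i y)" if "Q x y" for x y using that QJ i3 unfolding restr_def by auto
  qed
  then have "(v, i m) \<in> B" using vn cn BB unfolding Bd_def R_def by auto
  then have inB: "(\<pi> (i a), i b) \<in> B" if "a \<in> {1..m}" "b \<in> {1..m}" for a b
  proof -
    have "\<pi> (i a) \<in> {1..n}" using i1 that mk permutes_in_image[OF perm, of "i a"] by auto
    moreover have "i b \<in> {1..n}" using i1 that mk by auto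
    moreover have "i b \<le> i m" using ile that mk by auto
    ultimately show ?thesis using Bd_down[of v "i m" \<pi>0 "\<pi> (i a)" "i b"] v_ge[OF that(1)]
      \<open>(v, i m) \<in> B\<close> unfolding B_def by auto
  qed
  have ibn: "i b \<in> {1..n}" if "b \<in> {1..m}" for b using i1 that mk by auto
  have iCl: "i b \<in> Cl" if "b \<in> {1..m}" for b using F_Cl[OF pF ibn[OF that]] inB[OF that that] by auto
  have iRw: "\<pi> (i b) \<in> Rw" if "b \<in> {1..m}" for b using F_Rw[OF pF ibn[OF that]] inB[OF that that] by auto
  define cc where "cc b = (SOME c. c \<in> {1..n'} \<and> \<kappa> c = i b)" for b
  define w where "w b = (SOME r. r \<in> {1..n'} \<and> \<rho> r = \<pi> (i b))" for b
  have cc: "cc b \<in> {1..n'} \<and> \<kappa> (cc b) = i b" if "b \<in> {1..m}" for b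
    unfolding cc_def using \<kappa>_surj[OF iCl[OF that]] by (metis (mono_tags, lifting) someI_ex)
  have w: "w b \<in> {1..n'} \<and> \<rho> (w b) = \<pi> (i b)" if "b \<in> {1..m}" for b
    unfolding w_def using \<rho>_surj[OF iRw[OF that]] by (metis (mono_tags, lifting) someI_ex)
  have winj: "inj_on w {1..m}"
  proof (rule inj_onI)
    fix a b assume ab: "a \<in> {1..m}" "b \<in> {1..m}" "w a = w b"
    then have "\<pi> (i a) = \<pi> (i b)" using w by metis
    then have "i a = i b" using injD[OF permutes_inj[OF perm]] by blast
    then show "a = b" using i2 ab mk by (metis atLeastAtMost_iff linorder_neqE_nat order_less_irrefl le_less_trans less_imp_le_nat)
  qed
  obtain r \<sigma> where r1: "\<forall>a b. 1 \<le> a \<longrightarrow> a < b \<longrightarrow> b \<le> m \<longrightarrow> r a < r b"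
    and r2: "\<forall>b\<in>{1..m}. \<sigma> b \<in> {1..m} \<and> r (\<sigma> b) = w b"
    and r3: "\<forall>a\<in>{1..m}. r a \<in> w ` {1..m}"
    using sort_exists[OF winj] by blast
  have rle: "r a \<le> r b" if "1 \<le> a" "a \<le> b" "b \<le> m" for a b
    using r1 that by (cases "a = b") (auto intro: less_imp_le)
  have h1: "\<forall>a\<in>{1..m}. r a \<in> {1..n'} \<and> cc a \<in> {1..n'}"
  proof
    fix a assume a: "a \<in> {1..m}"
    have "r a \<in> w ` {1..m}" using r3 a by blast
    then obtain b where b: "b \<in> {1..m}" "r a = w b" by blast
    show "r a \<in> {1..n'} \<and> cc a \<in> {1..n'}" using w[OF b(1)] b cc[OF a] by simp
  qed
  have h3: "\<forall>a\<in>{1..m}. \<forall>b'\<in>{1..m}. (r a, cc b') \<in> cells n' lam"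
  proof (intro ballI)
    fix a b' assume a: "a \<in> {1..m}" and b': "b' \<in> {1..m}"
    have "r a \<in> w ` {1..m}" using r3 a by blast
    then obtain b where b: "b \<in> {1..m}" "r a = w b" by blast
    have "(\<rho> (r a), \<kappa> (cc b')) \<in> B" using w[OF b(1)] b cc[OF b'] inB[OF b(1) b'] by simp
    then show "(r a, cc b') \<in> cells n' lam" using cells_iff w[OF b(1)] b cc[OF b'] by simp
  qed
  have h2: "\<forall>a b. 1 \<le> a \<longrightarrow> a < b \<longrightarrow> b \<le> m \<longrightarrow> r a < r b \<and> cc a < cc b"
  proof (intro allI impI)
    fix a b :: nat assume ab: "1 \<le> a" "a < b" "b \<le> m"
    have "\<kappa> (cc a) < \<kappa> (cc b)" using cc[of a] cc[of b] ab i2 mk by auto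
    moreover have ca: "cc a \<in> {1..n'}" "cc b \<in> {1..n'}" using cc[of a] cc[of b] ab by auto
    ultimately have "cc a < cc b" using \<kappa>_less[OF ca] by simp
    then show "r a < r b \<and> cc a < cc b" using r1 ab by auto
  qed
  have h4: "\<forall>b\<in>{1..m}. \<sigma> b \<in> {1..m} \<and> (r (\<sigma> b), cc b) \<in> \<Phi> \<pi>"
  proof
    fix b assume b: "b \<in> {1..m}"
    show "\<sigma> b \<in> {1..m} \<and> (r (\<sigma> b), cc b) \<in> \<Phi> \<pi>" unfolding \<Phi>_def using r2 b w[OF b] cc[OF b] by auto
  qed
  have h5: "\<forall>j m'. restr p {1..m} j m' \<longrightarrow> \<sigma> j < \<sigma> m'"
  proof (intro allI impI)
    fix j m' assume jm: "restr p {1..m} j m'"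
    then have jm': "j \<in> {1..m}" "m' \<in> {1..m}" "p j m'" unfolding restr_def by auto
    then have "\<pi> (i j) < \<pi> (i m')" using i3 by auto
    then have "\<rho> (w j) < \<rho> (w m')" using w jm' by metis
    then have "w j < w m'" using \<rho>_less w jm' by metis
    then have lt: "r (\<sigma> j) < r (\<sigma> m')" using r2 jm' by metis
    show "\<sigma> j < \<sigma> m'"
    proof (rule ccontr)
      assume "\<not> \<sigma> j < \<sigma> m'"
      then have "r (\<sigma> m') \<le> r (\<sigma> j)" using rle r2 jm' by (metis atLeastAtMost_iff not_less)
      then show False using lt by simp
    qed
  qed
  show "tcontains n' lam (\<Phi> \<pi>) m (restr p {1..m})"
    unfolding tcontains_def
    by (intro exI[of _ r] exI[of _ cc] exI[of _ \<sigma>]) (use h1 h2 h3 h4 h5 in blast)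
next
  have perm: "\<pi> permutes {1..n}" using F_perm[OF pF] .
  have BB: "Bd \<pi> = B" using F_Bd[OF pF] .
  have prange: "x \<in> {1..k} \<and> y \<in> {1..k}" if "p x y" for x y using popk that unfolding pop_def by blast
  assume "tcontains n' lam (\<Phi> \<pi>) m (restr p {1..m})"
  then obtain r c \<sigma> where t1: "\<forall>a\<in>{1..m}. r a \<in> {1..n'} \<and> c a \<in> {1..n'}"
    and t2: "\<forall>a b. 1 \<le> a \<longrightarrow> a < b \<longrightarrow> b \<le> m \<longrightarrow> r a < r b \<and> c a < c b"
    and t3: "\<forall>a\<in>{1..m}. \<forall>b\<in>{1..m}. (r a, c b) \<in> cells n' lam"
    and t4: "\<forall>b\<in>{1..m}. \<sigma> b \<in> {1..m} \<and> (r (\<sigma> b), c b) \<in> \<Phi> \<pi>"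
    and t5: "\<forall>j m'. restr p {1..m} j m' \<longrightarrow> \<sigma> j < \<sigma> m'"
    unfolding tcontains_def by blast
  have mm: "m \<in> {1..m}" using m1 by auto
  have "(\<rho> (r m), \<kappa> (c m)) \<in> B" using t3 mm cells_iff by blast
  then have "R \<pi> (\<kappa> (c m)) (\<rho> (r m))" using BB unfolding Bd_def by auto
  then obtain g where g: "wit \<pi> (\<kappa> (c m)) (\<rho> (r m)) g" unfolding R_def by auto
  have g1: "\<forall>x\<in>{m+1..k}. g x \<in> {1..n}" and g2: "\<forall>x y. m+1 \<le> x \<longrightarrow> x < y \<longrightarrow> y \<le> k \<longrightarrow> g x < g y"
    and g3: "\<kappa> (c m) < g (m+1)" and g4: "\<forall>x\<in>J. \<rho> (r m) < \<pi> (g x)"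
    and g5: "\<forall>x y. Q x y \<longrightarrow> \<pi> (g x) < \<pi> (g y)" using g unfolding wit_def by auto
  have rle: "r a \<le> r b" if "1 \<le> a" "a \<le> b" "b \<le> m" for a b
    using t2 that by (cases "a = b") (auto intro: less_imp_le)
  have cle: "c a \<le> c b" if "1 \<le> a" "a \<le> b" "b \<le> m" for a b
    using t2 that by (cases "a = b") (auto intro: less_imp_le)
  have gle: "g a \<le> g b" if "m+1 \<le> a" "a \<le> b" "b \<le> k" for a b
    using g2 that by (cases "a = b") (auto intro: less_imp_le)
  have valA: "\<pi> (\<kappa> (c j)) = \<rho> (r (\<sigma> j))" if "j \<in> {1..m}" for j
    using t4 that unfolding \<Phi>_def by auto
  have valA_le: "\<pi> (\<kappa> (c j)) \<le> \<rho> (r m)" if j: "j \<in> {1..m}" for j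
  proof -
    have sj: "\<sigma> j \<in> {1..m}" using t4 j by auto
    then have "r (\<sigma> j) \<le> r m" using rle by auto
    then have "\<rho> (r (\<sigma> j)) \<le> \<rho> (r m)" using \<rho>_le t1 sj mm by auto
    then show ?thesis using valA[OF j] by simp
  qed
  define i where "i j = (if j \<le> m then \<kappa> (c j) else g j)" for j
  show "contains k p n \<pi>"
    unfolding contains_def
  proof (intro exI[of _ i] conjI ballI allI impI)
    fix j assume j: "j \<in> {1..k}"
    show "i j \<in> {1..n}"
    proof (cases "j \<le> m")
      case True
      then have "c j \<in> {1..n'}" using t1 j by auto
      then have "\<kappa> (c j) \<in> {1..n}" using \<kappa>_in Cl_sub by blast
      then show ?thesis unfolding i_def using True by simp
    next
      case False
      then show ?thesis unfolding i_def using g1 j by auto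
    qed
  next
    fix j m' assume jm: "1 \<le> j" "j < m'" "m' \<le> k"
    show "i j < i m'"
    proof (cases "m' \<le> m")
      case True
      then show ?thesis unfolding i_def using jm t2 \<kappa>_less t1 by auto
    next
      case False
      note mF = False
      show ?thesis
      proof (cases "j \<le> m")
        case True
        have "\<kappa> (c j) \<le> \<kappa> (c m)" using cle[of j m] True jm \<kappa>_le t1 mm by auto
        moreover have "g (m+1) \<le> g m'" using gle mF jm by auto
        ultimately show ?thesis unfolding i_def using True mF g3 by auto
      next
        case False
        then show ?thesis unfolding i_def using mF g2 jm by auto
      qed
    qed
  next
    fix j m' assume pj: "p j m'"
    have jr: "j \<in> {1..k}" "m' \<in> {1..k}" using prange[OF pj] by auto
    show "\<pi> (i j) < \<pi> (i m')"
    proof (cases "j \<le> m")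
      case jT: True
      show ?thesis
      proof (cases "m' \<le> m")
        case True
        have "restr p {1..m} j m'" unfolding restr_def using jT True jr pj by auto
        then have s: "\<sigma> j < \<sigma> m'" using t5 by auto
        have sj: "\<sigma> j \<in> {1..m}" "\<sigma> m' \<in> {1..m}" using t4 jT True jr by auto
        then have "r (\<sigma> j) < r (\<sigma> m')" using t2 s by auto
        then have "\<rho> (r (\<sigma> j)) < \<rho> (r (\<sigma> m'))" using \<rho>_less t1 sj by auto
        then show ?thesis unfolding i_def using jT True valA jr by auto
      next
        case False
        then have "m' \<in> J" using Jp2[OF pj] by auto
        then have "\<rho> (r m) < \<pi> (g m')" using g4 by auto
        moreover have "\<pi> (\<kappa> (c j)) \<le> \<rho> (r m)" using valA_le jT jr by auto
        ultimately show ?thesis unfolding i_def using jT False by auto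
      qed
    next
      case jF: False
      then have jJ: "j \<in> J" using Jp1[OF pj] by auto
      show ?thesis
      proof (cases "m' \<le> m")
        case True
        then have "p m' j" using below[OF jJ] jr by auto
        then have "p j j" using pj popk unfolding pop_def by blast
        then show ?thesis using popk unfolding pop_def by blast
      next
        case False
        then have "m' \<in> J" using Jp2[OF pj] by auto
        then have "Q j m'" using QJ jJ pj unfolding restr_def by auto
        then show ?thesis unfolding i_def using g5 jF False by auto
      qed
    qed
  qed
qed

lemma fiber_card:
  assumes popk: "pop k p" and m1: "1 \<le> m"
    and Jp1: "\<And>x y. p x y \<Longrightarrow> m < x \<Longrightarrow> x \<in> J"
    and Jp2: "\<And>x y. p x y \<Longrightarrow> m < y \<Longrightarrow> y \<in> J"
    and below: "\<And>x y. x \<in> J \<Longrightarrow> y \<in> {1..m} \<Longrightarrow> p y x"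
    and QJ: "Q = restr p J"
  shows "card {\<pi>\<in>{\<pi>. \<pi> permutes {1..n}}. key \<pi> = key \<pi>0 \<and> \<not> contains k p n \<pi>}
       = card (tavoiders n' lam m (restr p {1..m}))"
proof -
  have eq: "{\<pi>\<in>{\<pi>. \<pi> permutes {1..n}}. key \<pi> = key \<pi>0 \<and> \<not> contains k p n \<pi>}
      = {\<pi>\<in>F. \<not> tcontains n' lam (\<Phi> \<pi>) m (restr p {1..m})}"
  proof (intro set_eqI iffI)
    fix \<pi> assume "\<pi> \<in> {\<pi>\<in>{\<pi>. \<pi> permutes {1..n}}. key \<pi> = key \<pi>0 \<and> \<not> contains k p n \<pi>}"
    then have a: "\<pi> permutes {1..n}" "key \<pi> = key \<pi>0" "\<not> contains k p n \<pi>" by auto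
    then have pF: "\<pi> \<in> F" using key_F by auto
    show "\<pi> \<in> {\<pi>\<in>F. \<not> tcontains n' lam (\<Phi> \<pi>) m (restr p {1..m})}"
      using pF a(3) contains_iff[OF assms pF] by auto
  next
    fix \<pi> assume "\<pi> \<in> {\<pi>\<in>F. \<not> tcontains n' lam (\<Phi> \<pi>) m (restr p {1..m})}"
    then have pF: "\<pi> \<in> F" and nt: "\<not> tcontains n' lam (\<Phi> \<pi>) m (restr p {1..m})" by auto
    have "\<pi> permutes {1..n}" using F_perm[OF pF] .
    then show "\<pi> \<in> {\<pi>\<in>{\<pi>. \<pi> permutes {1..n}}. key \<pi> = key \<pi>0 \<and> \<not> contains k p n \<pi>}"
      using key_F pF nt contains_iff[OF assms pF] by auto
  qed
  have "bij_betw \<Phi> {\<pi>\<in>F. \<not> tcontains n' lam (\<Phi> \<pi>) m (restr p {1..m})}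
          {T \<in> {T. transversal n' lam T}. \<not> tcontains n' lam T m (restr p {1..m})}"
  proof -
    have b: "bij_betw \<Phi> F {T. transversal n' lam T}" by (rule \<Phi>_bij)
    show ?thesis
    proof (rule bij_betw_subset[OF b])
      show "{\<pi>\<in>F. \<not> tcontains n' lam (\<Phi> \<pi>) m (restr p {1..m})} \<subseteq> F" by auto
      show "\<Phi> ` {\<pi>\<in>F. \<not> tcontains n' lam (\<Phi> \<pi>) m (restr p {1..m})}
          = {T \<in> {T. transversal n' lam T}. \<not> tcontains n' lam T m (restr p {1..m})}"
      proof (intro set_eqI iffI)
        fix T assume "T \<in> \<Phi> ` {\<pi>\<in>F. \<not> tcontains n' lam (\<Phi> \<pi>) m (restr p {1..m})}"
        then obtain \<pi> where "\<pi> \<in> F" "\<not> tcontains n' lam (\<Phi> \<pi>) m (restr p {1..m})" "T = \<Phi> \<pi>" by blast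
        then show "T \<in> {T \<in> {T. transversal n' lam T}. \<not> tcontains n' lam T m (restr p {1..m})}"
          using \<Phi>_trans by blast
      next
        fix T assume "T \<in> {T \<in> {T. transversal n' lam T}. \<not> tcontains n' lam T m (restr p {1..m})}"
        then have T: "transversal n' lam T" "\<not> tcontains n' lam T m (restr p {1..m})" by auto
        then obtain \<pi> where "\<pi> \<in> F" "\<Phi> \<pi> = T" using \<Phi>_surj by blast
        then show "T \<in> \<Phi> ` {\<pi>\<in>F. \<not> tcontains n' lam (\<Phi> \<pi>) m (restr p {1..m})}"
          using T by blast
      qed
    qed
  qed
  then have "card {\<pi>\<in>F. \<not> tcontains n' lam (\<Phi> \<pi>) m (restr p {1..m})}
     = card (tavoiders n' lam m (restr p {1..m}))"
    unfolding tavoiders_def by (simp add: bij_betw_same_card)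
  then show ?thesis using eq by simp
qed

end

theorem theorem1p2:
  fixes k :: nat and p p' :: "nat \<Rightarrow> nat \<Rightarrow> bool"
  assumes "pop k p" and "pop k p'"
    and "isolated_set k p = isolated_set k p'"
    and "isolated_set k p \<noteq> {}"
    and "\<forall>x\<in>{Min (isolated_set k p)..k} - isolated_set k p.
           \<forall>y\<in>{1..Min (isolated_set k p) - 1}. p y x \<and> p' y x"
    and "shape_wilf_equiv (Min (isolated_set k p) - 1)
           (restr p {1..Min (isolated_set k p) - 1})
           (restr p' {1..Min (isolated_set k p) - 1})"
    and "restr p ({Min (isolated_set k p)..k} - isolated_set k p)
         = restr p' ({Min (isolated_set k p)..k} - isolated_set k p)"
  shows "wilf_equiv k p p'"
proof -
  note popp = assms(1) and popq = assms(2)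
  define I where "I = isolated_set k p"
  define i1 where "i1 = Min I"
  define m where "m = i1 - 1"
  define J where "J = {i1..k} - I"
  define Q where "Q = restr p J"
  have Isub: "I \<subseteq> {1..k}" unfolding I_def isolated_set_def isolated_def by auto
  have Ine: "I \<noteq> {}" using assms(4) I_def by simp
  have finI: "finite I" using Isub finite_subset by blast
  have i1I: "i1 \<in> I" unfolding i1_def using Min_in[OF finI Ine] .
  have i1r: "1 \<le> i1" "i1 \<le> k" using i1I Isub by auto
  have Imin: "i1 \<le> x" if "x \<in> I" for x unfolding i1_def using Min_le[OF finI that] .
  have Iq: "I = isolated_set k p'" using assms(3) I_def by simp
  have notisoP: "x \<notin> I \<and> y \<notin> I \<and> x \<in> {1..k} \<and> y \<in> {1..k}" if "p x y" for x y
  proof -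
    have r: "x \<in> {1..k}" "y \<in> {1..k}" using popp that unfolding pop_def by blast+
    then show ?thesis using that unfolding I_def isolated_set_def isolated_def by auto
  qed
  have notisoQ: "x \<notin> I \<and> y \<notin> I \<and> x \<in> {1..k} \<and> y \<in> {1..k}" if "p' x y" for x y
  proof -
    have r: "x \<in> {1..k}" "y \<in> {1..k}" using popq that unfolding pop_def by blast+
    then show ?thesis using that unfolding Iq isolated_set_def isolated_def by auto
  qed
  have h5: "\<forall>x\<in>J. \<forall>y\<in>{1..m}. p y x \<and> p' y x" using assms(5) unfolding J_def m_def i1_def I_def .
  have h6: "shape_wilf_equiv m (restr p {1..m}) (restr p' {1..m})"
    using assms(6) unfolding m_def i1_def I_def .
  have h7: "restr p J = restr p' J" using assms(7) unfolding J_def i1_def I_def .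
  show ?thesis
  proof (cases "m = 0")
    case True
    then have i11: "i1 = 1" using i1r m_def by simp
    have "p x y = p' x y" for x y
    proof
      assume pxy: "p x y"
      then have "x \<in> J" "y \<in> J" using notisoP[OF pxy] i11 unfolding J_def by auto
      then have "restr p J x y" using pxy unfolding restr_def by auto
      then show "p' x y" using h7 unfolding restr_def by metis
    next
      assume pxy: "p' x y"
      then have "x \<in> J" "y \<in> J" using notisoQ[OF pxy] i11 unfolding J_def by auto
      then have "restr p' J x y" using pxy unfolding restr_def by auto
      then show "p x y" using h7 unfolding restr_def by metis
    qed
    then have "p = p'" by (intro ext)
    then show ?thesis unfolding wilf_equiv_def by simp
  next
    case False
    then have m1: "1 \<le> m" by simp
    have mi1: "m + 1 = i1" using i1r m_def by simp
    have Jsub: "J \<subseteq> {m+1..k}" unfolding J_def using mi1 by auto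
    have QJ': "Q x y \<Longrightarrow> x \<in> J \<and> y \<in> J" for x y unfolding Q_def restr_def by auto
    have mk: "m < k" using mi1 i1r by simp
    have Jp1: "x \<in> J" if "p x y" "m < x" for x y using notisoP[OF that(1)] that(2) mi1 unfolding J_def by auto
    have Jp2: "y \<in> J" if "p x y" "m < y" for x y using notisoP[OF that(1)] that(2) mi1 unfolding J_def by auto
    have Jq1: "x \<in> J" if "p' x y" "m < x" for x y using notisoQ[OF that(1)] that(2) mi1 unfolding J_def by auto
    have Jq2: "y \<in> J" if "p' x y" "m < y" for x y using notisoQ[OF that(1)] that(2) mi1 unfolding J_def by auto
    have belowp: "p y x" if "x \<in> J" "y \<in> {1..m}" for x y using h5 that by blast
    have belowq: "p' y x" if "x \<in> J" "y \<in> {1..m}" for x y using h5 that by blast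
    have Qp: "Q = restr p J" unfolding Q_def ..
    have Qq: "Q = restr p' J" unfolding Q_def using h7 .
    have "card (avoiders k p n) = card (avoiders k p' n)" for n
    proof -
      interpret B0: board n m k J Q by unfold_locales (use Jsub QJ' mk in auto)
      define Pn where "Pn = {\<pi>. \<pi> permutes {1..n}}"
      have finP: "finite Pn" unfolding Pn_def by (rule finite_permutations) simp
      have av: "avoiders k r n = {\<pi>\<in>Pn. \<not> contains k r n \<pi>}" for r
        unfolding avoiders_def Pn_def by auto
      have eqfib: "card {\<pi>\<in>Pn. B0.key \<pi> = y \<and> \<not> contains k p n \<pi>}
                 = card {\<pi>\<in>Pn. B0.key \<pi> = y \<and> \<not> contains k p' n \<pi>}" if y: "y \<in> B0.key ` Pn" for y
      proof -
        obtain \<pi>0 where \<pi>0: "\<pi>0 \<in> Pn" "y = B0.key \<pi>0" using y by blast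
        interpret F0: fiber n m k J Q \<pi>0
          by unfold_locales (use Jsub QJ' mk \<pi>0 Pn_def in auto)
        have c1: "card {\<pi>\<in>Pn. B0.key \<pi> = y \<and> \<not> contains k p n \<pi>}
             = card (tavoiders F0.n' F0.lam m (restr p {1..m}))"
          using F0.fiber_card[OF popp m1 Jp1 Jp2 belowp Qp] unfolding Pn_def \<pi>0(2) .
        have c2: "card {\<pi>\<in>Pn. B0.key \<pi> = y \<and> \<not> contains k p' n \<pi>}
             = card (tavoiders F0.n' F0.lam m (restr p' {1..m}))"
          using F0.fiber_card[OF popq m1 Jq1 Jq2 belowq Qq] unfolding Pn_def \<pi>0(2) .
        show ?thesis using c1 c2 h6 F0.ferrers_lam unfolding shape_wilf_equiv_def by simp
      qed
      have "card (avoiders k p n) = (\<Sum>y\<in>B0.key ` Pn. card {\<pi>\<in>Pn. B0.key \<pi> = y \<and> \<not> contains k p n \<pi>})"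
        unfolding av by (rule card_fibers[OF finP])
      also have "\<dots> = (\<Sum>y\<in>B0.key ` Pn. card {\<pi>\<in>Pn. B0.key \<pi> = y \<and> \<not> contains k p' n \<pi>})"
        using eqfib by (rule sum.cong[OF refl])
      also have "\<dots> = card (avoiders k p' n)"
        unfolding av by (rule card_fibers[OF finP, symmetric])
      finally show ?thesis .
    qed
    then show ?thesis unfolding wilf_equiv_def by simp
  qed
qed

end
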